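(* Let $\mathcal L$ be either FO or MSO, let $k\ge 0$, let $\sigma,\sigma'$ be disjoint vocabularies, $\mathfrak C$ a class of finite $\sigma'$-structures and $\mathcal D$ a class of finite $\sigma$-structures. Let $\mathcal A\in\mathcal D$ and $\mathcal B\in\mathfrak C$ with $\mathrm{dom}(\mathcal A)=\mathrm{dom}(\mathcal B)$, and let $\psi_{(\mathcal A,\mathcal B)}$ be the disjunction of the sentences $\mathrm{tp}^k_{\mathcal L}(\mathcal A',\mathcal B')$ over all $\mathcal A'\in\mathcal D$, $\mathcal B'\in\mathfrak C$ with $\mathrm{dom}(\mathcal A')=\mathrm{dom}(\mathcal B')$ such that $(\mathcal A',\mathcal B')$ is a $k$-flip of $(\mathcal A,\mathcal B)$ under $(\mathcal L,\mathcal D,\mathfrak C)$. Then: (1) for every $\mathcal A'\in\mathcal D$ and $\mathcal B'\in\mathfrak C$ with $\mathrm{dom}(\mathcal A')=\mathrm{dom}(\mathcal B')$, $(\mathcal A',\mathcal B')\models\psi_{(\mathcal A,\mathcal B)}$ if and only if $(\mathcal A',\mathcal B')$ is a $k$-flip of $(\mathcal A,\mathcal B)$ under $(\mathcal L,\mathcal D,\mathfrak C)$; (2) $\psi_{(\mathcal A,\mathcal B)}$ is an $\mathcal L$-sentence of quantifier rank at most $k$ that is $\mathfrak C$-invariant over $\mathcal D$; (3) for every $\mathcal A'\in\mathcal D$, $\mathrm{tp}^k_{\mathrm{inv}(\mathcal L+\{\mathfrak C\})^{\mathcal D}}(\mathcal A)=\mathrm{tp}^k_{\mathrm{inv}(\mathcal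 L+\{\mathfrak C\})^{\mathcal D}}(\mathcal A')$ if and only if $\mathcal A'\in Q_{\psi_{(\mathcal A,\mathcal B)}}$.
   Context: All structures are finite; vocabularies consist of relation and constant symbols. For a $\sigma$-structure $\mathcal A$ and a $\sigma'$-structure $\mathcal B$ with the same domain, $(\mathcal A,\mathcal B)$ denotes the $(\sigma\cup\sigma')$-structure on that domain interpreting $\sigma$ as in $\mathcal A$ and $\sigma'$ as in $\mathcal B$. $\mathrm{tp}^k_{\mathcal L}(\mathcal M)$ is the set of $\mathcal L$-sentences of quantifier rank at most $k$ true in $\mathcal M$; up to logical equivalence it is finite and is identified with the single sentence given by the conjunction of its members (so there are finitely many such types and the disjunction above is finite up to equivalence). An $\mathcal L$-sentence $\varphi$ over $\sigma\cup\sigma'$ is $\mathfrak C$-invariant over $\mathcal D$ if for every $\mathcal A\in\mathcal D$ and all $\mathcal B_1,\mathcal B_2\in\mathfrak C$ with domain $\mathrm{dom}(\mathcal A)$, $(\mathcal A,\mathcal B_1)\models\varphi$ iff $(\mathcal A,\mathcal B_2)\models\varphi$; such $\varphi$ defines $Q_\varphi=\{\mathcal A\in\mathcal D : (\mathcal A,\mathcal B)\models\varphi$ for some (equivalently all) $\mathcal B\in\mathfrak C$ with $\mathrm{dom}(\mathcal B)=\mathrm{dom}(\mathcal A)\}$. The type $\mathrm{tp}^k_{\mathrm{inv}(\mathcal L+\{\mathfrak C\})^{\mathcal D}}(\mathcal A)$ is the set of all $\mathfrak C$-invariant over $\mathcal D$ $\mathcal L$-sentences $\varphi$ of quantifier rank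 at most $k$ with $\mathcal A\in Q_\varphi$. For pairs $(\mathcal A,\mathcal B),(\mathcal A',\mathcal B')$ with $\mathcal A,\mathcal A'\in\mathcal D$, $\mathcal B,\mathcal B'\in\mathfrak C$ and shared domains, $(\mathcal A,\mathcal B)\sim_k(\mathcal A',\mathcal B')$ means $\mathcal A=\mathcal A'$ or $\mathrm{tp}^k_{\mathcal L}(\mathcal A,\mathcal B)=\mathrm{tp}^k_{\mathcal L}(\mathcal A',\mathcal B')$; a $k$-flip of $(\mathcal A,\mathcal B)$ under $(\mathcal L,\mathcal D,\mathfrak C)$ is any pair reachable from $(\mathcal A,\mathcal B)$ by a finite sequence of $\sim_k$ steps. *)

theory Defs
  imports Main
begin

text \<open>A relation symbol is a pair (name, arity). A vocabulary is a pair
 (set of relation symbols, set of constant symbols).\<close>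

type_synonym ('r,'c) voc = "('r \<times> nat) set \<times> 'c set"

definition rels :: "('r,'c) voc \<Rightarrow> ('r \<times> nat) set" where "rels \<sigma> = fst \<sigma>"
definition consts_of :: "('r,'c) voc \<Rightarrow> 'c set" where "consts_of \<sigma> = snd \<sigma>"

definition voc_union :: "('r,'c) voc \<Rightarrow> ('r,'c) voc \<Rightarrow> ('r,'c) voc" where
  "voc_union \<sigma> \<sigma>' = (rels \<sigma> \<union> rels \<sigma>', consts_of \<sigma> \<union> consts_of \<sigma>')"

definition voc_disjoint :: "('r,'c) voc \<Rightarrow> ('r,'c) voc \<Rightarrow> bool" where
  "voc_disjoint \<sigma> \<sigma>' \<longleftrightarrow> rels \<sigma> \<inter> rels \<sigma>' = {} \<and> consts_of \<sigma> \<inter> consts_of \<sigma>' = {}"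

definition voc_finite :: "('r,'c) voc \<Rightarrow> bool" where
  "voc_finite \<sigma> \<longleftrightarrow> finite (rels \<sigma>) \<and> finite (consts_of \<sigma>)"

record ('a,'r,'c) struc =
  sdom :: "'a set"
  srel :: "'r \<times> nat \<Rightarrow> 'a list \<Rightarrow> bool"
  scst :: "'c \<Rightarrow> 'a"

text \<open>A finite \<sigma>-structure: finite nonempty domain, constants interpreted in the
 domain, relations interpreted as sets of tuples of the right length over the domain;
 symbols outside \<sigma> get a canonical trivial interpretation (so that structures are
 determined by their \<sigma>-part and equality of structures is the intended one).\<close>

definition is_struc :: "('r,'c) voc \<Rightarrow> ('a,'r,'c) struc \<Rightarrow> bool" where
  "is_struc \<sigma> M \<longleftrightarrow> finite (sdom M) \<and> sdom M \<noteq> {}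
     \<and> (\<forall>c \<in> consts_of \<sigma>. scst M c \<in> sdom M)
     \<and> (\<forall>c. c \<notin> consts_of \<sigma> \<longrightarrow> scst M c = undefined)
     \<and> (\<forall>R ts. srel M R ts \<longrightarrow> R \<in> rels \<sigma> \<and> length ts = snd R \<and> set ts \<subseteq> sdom M)"

definition expand :: "('r,'c) voc \<Rightarrow> ('a,'r,'c) struc \<Rightarrow> ('a,'r,'c) struc \<Rightarrow> ('a,'r,'c) struc" where
  "expand \<sigma> A B = \<lparr> sdom = sdom A,
     srel = (\<lambda>R ts. if R \<in> rels \<sigma> then srel A R ts else srel B R ts),
     scst = (\<lambda>c. if c \<in> consts_of \<sigma> then scst A c else scst B c) \<rparr>"

datatype 'c trm = Var nat | Cst 'c

datatype ('r,'c) fm =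
    Top
  | Eq "'c trm" "'c trm"
  | Rel "'r \<times> nat" "'c trm list"
  | Mem "'c trm" nat          \<comment> \<open>first-order term belongs to a set variable\<close>
  | Neg "('r,'c) fm"
  | Conj "('r,'c) fm" "('r,'c) fm"
  | Disj "('r,'c) fm" "('r,'c) fm"
  | Ex nat "('r,'c) fm"
  | All nat "('r,'c) fm"
  | ExS nat "('r,'c) fm"
  | AllS nat "('r,'c) fm"

datatype logic = FO | MSO

fun qr :: "('r,'c) fm \<Rightarrow> nat" where
  "qr Top = 0"
| "qr (Eq s t) = 0"
| "qr (Rel R ts) = 0"
| "qr (Mem t X) = 0"
| "qr (Neg \<phi>) = qr \<phi>"
| "qr (Conj \<phi> \<psi>) = max (qr \<phi>) (qr \<psi>)"
| "qr (Disj \<phi> \<psi>) = max (qr \<phi>) (qr \<psi>)"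
| "qr (Ex x \<phi>) = Suc (qr \<phi>)"
| "qr (All x \<phi>) = Suc (qr \<phi>)"
| "qr (ExS X \<phi>) = Suc (qr \<phi>)"
| "qr (AllS X \<phi>) = Suc (qr \<phi>)"

fun is_FO :: "('r,'c) fm \<Rightarrow> bool" where
  "is_FO (Mem t X) = False"
| "is_FO (ExS X \<phi>) = False"
| "is_FO (AllS X \<phi>) = False"
| "is_FO (Neg \<phi>) = is_FO \<phi>"
| "is_FO (Conj \<phi> \<psi>) = (is_FO \<phi> \<and> is_FO \<psi>)"
| "is_FO (Disj \<phi> \<psi>) = (is_FO \<phi> \<and> is_FO \<psi>)"
| "is_FO (Ex x \<phi>) = is_FO \<phi>"
| "is_FO (All x \<phi>) = is_FO \<phi>"
| "is_FO _ = True"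

definition in_logic :: "logic \<Rightarrow> ('r,'c) fm \<Rightarrow> bool" where
  "in_logic L \<phi> \<longleftrightarrow> (L = FO \<longrightarrow> is_FO \<phi>)"

fun tvars :: "'c trm \<Rightarrow> nat set" where
  "tvars (Var i) = {i}" | "tvars (Cst c) = {}"

fun tconsts :: "'c trm \<Rightarrow> 'c set" where
  "tconsts (Var i) = {}" | "tconsts (Cst c) = {c}"

fun fv1 :: "('r,'c) fm \<Rightarrow> nat set" where
  "fv1 Top = {}"
| "fv1 (Eq s t) = tvars s \<union> tvars t"
| "fv1 (Rel R ts) = (\<Union>t\<in>set ts. tvars t)"
| "fv1 (Mem t X) = tvars t"
| "fv1 (Neg \<phi>) = fv1 \<phi>"
| "fv1 (Conj \<phi> \<psi>) = fv1 \<phi> \<union> fv1 \<psi>"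
| "fv1 (Disj \<phi> \<psi>) = fv1 \<phi> \<union> fv1 \<psi>"
| "fv1 (Ex x \<phi>) = fv1 \<phi> - {x}"
| "fv1 (All x \<phi>) = fv1 \<phi> - {x}"
| "fv1 (ExS X \<phi>) = fv1 \<phi>"
| "fv1 (AllS X \<phi>) = fv1 \<phi>"

fun fv2 :: "('r,'c) fm \<Rightarrow> nat set" where
  "fv2 (Mem t X) = {X}"
| "fv2 (Neg \<phi>) = fv2 \<phi>"
| "fv2 (Conj \<phi> \<psi>) = fv2 \<phi> \<union> fv2 \<psi>"
| "fv2 (Disj \<phi> \<psi>) = fv2 \<phi> \<union> fv2 \<psi>"
| "fv2 (Ex x \<phi>) = fv2 \<phi>"
| "fv2 (All x \<phi>) = fv2 \<phi>"
| "fv2 (ExS X \<phi>) = fv2 \<phi> - {X}"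
| "fv2 (AllS X \<phi>) = fv2 \<phi> - {X}"
| "fv2 _ = {}"

fun in_voc :: "('r,'c) voc \<Rightarrow> ('r,'c) fm \<Rightarrow> bool" where
  "in_voc \<tau> Top = True"
| "in_voc \<tau> (Eq s t) = (tconsts s \<union> tconsts t \<subseteq> consts_of \<tau>)"
| "in_voc \<tau> (Rel R ts) = (R \<in> rels \<tau> \<and> length ts = snd R \<and> (\<Union>t\<in>set ts. tconsts t) \<subseteq> consts_of \<tau>)"
| "in_voc \<tau> (Mem t X) = (tconsts t \<subseteq> consts_of \<tau>)"
| "in_voc \<tau> (Neg \<phi>) = in_voc \<tau> \<phi>"
| "in_voc \<tau> (Conj \<phi> \<psi>) = (in_voc \<tau> \<phi> \<and> in_voc \<tau> \<psi>)"
| "in_voc \<tau> (Disj \<phi> \<psi>) = (in_voc \<tau> \<phi> \<and> in_voc \<tau> \<psi>)"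
| "in_voc \<tau> (Ex x \<phi>) = in_voc \<tau> \<phi>"
| "in_voc \<tau> (All x \<phi>) = in_voc \<tau> \<phi>"
| "in_voc \<tau> (ExS X \<phi>) = in_voc \<tau> \<phi>"
| "in_voc \<tau> (AllS X \<phi>) = in_voc \<tau> \<phi>"

fun teval :: "('a,'r,'c) struc \<Rightarrow> (nat \<Rightarrow> 'a) \<Rightarrow> 'c trm \<Rightarrow> 'a" where
  "teval M v (Var i) = v i"
| "teval M v (Cst c) = scst M c"

fun sat :: "('a,'r,'c) struc \<Rightarrow> (nat \<Rightarrow> 'a) \<Rightarrow> (nat \<Rightarrow> 'a set) \<Rightarrow> ('r,'c) fm \<Rightarrow> bool" where
  "sat M v V Top = True"
| "sat M v V (Eq s t) = (teval M v s = teval M v t)"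
| "sat M v V (Rel R ts) = srel M R (map (teval M v) ts)"
| "sat M v V (Mem t X) = (teval M v t \<in> V X)"
| "sat M v V (Neg \<phi>) = (\<not> sat M v V \<phi>)"
| "sat M v V (Conj \<phi> \<psi>) = (sat M v V \<phi> \<and> sat M v V \<psi>)"
| "sat M v V (Disj \<phi> \<psi>) = (sat M v V \<phi> \<or> sat M v V \<psi>)"
| "sat M v V (Ex x \<phi>) = (\<exists>a \<in> sdom M. sat M (v(x := a)) V \<phi>)"
| "sat M v V (All x \<phi>) = (\<forall>a \<in> sdom M. sat M (v(x := a)) V \<phi>)"
| "sat M v V (ExS X \<phi>) = (\<exists>S. S \<subseteq> sdom M \<and> sat M v (V(X := S)) \<phi>)"
| "sat M v V (AllS X \<phi>) = (\<forall>S. S \<subseteq> sdom M \<longrightarrow> sat M v (V(X := S)) \<phi>)"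

text \<open>Truth of a sentence (the assignments are irrelevant for sentences).\<close>
definition models :: "('a,'r,'c) struc \<Rightarrow> ('r,'c) fm \<Rightarrow> bool" where
  "models M \<phi> \<longleftrightarrow> sat M (\<lambda>_. undefined) (\<lambda>_. {}) \<phi>"

definition is_sentence :: "logic \<Rightarrow> nat \<Rightarrow> ('r,'c) voc \<Rightarrow> ('r,'c) fm \<Rightarrow> bool" where
  "is_sentence L k \<tau> \<phi> \<longleftrightarrow> in_logic L \<phi> \<and> qr \<phi> \<le> k \<and> fv1 \<phi> = {} \<and> fv2 \<phi> = {} \<and> in_voc \<tau> \<phi>"

definition tp :: "logic \<Rightarrow> nat \<Rightarrow> ('r,'c) voc \<Rightarrow> ('a,'r,'c) struc \<Rightarrow> ('r,'c) fm set" where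
  "tp L k \<tau> M = {\<phi>. is_sentence L k \<tau> \<phi> \<and> models M \<phi>}"

fun conj_list :: "('r,'c) fm list \<Rightarrow> ('r,'c) fm" where
  "conj_list [] = Top"
| "conj_list (\<phi> # \<phi>s) = Conj \<phi> (conj_list \<phi>s)"

fun disj_list :: "('r,'c) fm list \<Rightarrow> ('r,'c) fm" where
  "disj_list [] = Neg Top"
| "disj_list (\<phi> # \<phi>s) = Disj \<phi> (disj_list \<phi>s)"

text \<open>\<open>\<chi>\<close> is "the" single sentence identified with \<open>tp^k_\<L>(M)\<close>: a finite conjunction of
 members of the type which implies (over all \<tau>-structures) the whole type.\<close>
definition type_sentence :: "logic \<Rightarrow> nat \<Rightarrow> ('r,'c) voc \<Rightarrow> ('a,'r,'c) struc \<Rightarrow> ('r,'c) fm \<Rightarrow> bool" where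
  "type_sentence L k \<tau> M \<chi> \<longleftrightarrow>
     (\<exists>\<phi>s. set \<phi>s \<subseteq> tp L k \<tau> M \<and> \<chi> = conj_list \<phi>s
        \<and> (\<forall>N :: ('a,'r,'c) struc. is_struc \<tau> N \<longrightarrow> models N \<chi> \<longrightarrow> tp L k \<tau> N = tp L k \<tau> M))"

definition admissible :: "('r,'c) voc \<Rightarrow> ('a,'r,'c) struc set \<Rightarrow> ('a,'r,'c) struc set
    \<Rightarrow> ('a,'r,'c) struc \<times> ('a,'r,'c) struc \<Rightarrow> bool" where
  "admissible \<sigma> D C p \<longleftrightarrow> fst p \<in> D \<and> snd p \<in> C \<and> sdom (fst p) = sdom (snd p)"

definition sim_k :: "logic \<Rightarrow> nat \<Rightarrow> ('r,'c) voc \<Rightarrow> ('r,'c) voc \<Rightarrow> ('a,'r,'c) struc set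
    \<Rightarrow> ('a,'r,'c) struc set \<Rightarrow> ('a,'r,'c) struc \<times> ('a,'r,'c) struc
    \<Rightarrow> ('a,'r,'c) struc \<times> ('a,'r,'c) struc \<Rightarrow> bool" where
  "sim_k L k \<sigma> \<sigma>' D C p q \<longleftrightarrow> admissible \<sigma> D C p \<and> admissible \<sigma> D C q \<and>
     (fst p = fst q \<or>
      tp L k (voc_union \<sigma> \<sigma>') (expand \<sigma> (fst p) (snd p)) = tp L k (voc_union \<sigma> \<sigma>') (expand \<sigma> (fst q) (snd q)))"

definition is_flip :: "logic \<Rightarrow> nat \<Rightarrow> ('r,'c) voc \<Rightarrow> ('r,'c) voc \<Rightarrow> ('a,'r,'c) struc set
    \<Rightarrow> ('a,'r,'c) struc set \<Rightarrow> ('a,'r,'c) struc \<times> ('a,'r,'c) struc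
    \<Rightarrow> ('a,'r,'c) struc \<times> ('a,'r,'c) struc \<Rightarrow> bool" where
  "is_flip L k \<sigma> \<sigma>' D C p q \<longleftrightarrow> (sim_k L k \<sigma> \<sigma>' D C)\<^sup>*\<^sup>* p q"

definition C_invariant :: "('r,'c) voc \<Rightarrow> ('a,'r,'c) struc set \<Rightarrow> ('a,'r,'c) struc set
    \<Rightarrow> ('r,'c) fm \<Rightarrow> bool" where
  "C_invariant \<sigma> D C \<phi> \<longleftrightarrow> (\<forall>A\<in>D. \<forall>B1\<in>C. \<forall>B2\<in>C. sdom B1 = sdom A \<longrightarrow> sdom B2 = sdom A \<longrightarrow>
      (models (expand \<sigma> A B1) \<phi> \<longleftrightarrow> models (expand \<sigma> A B2) \<phi>))"

definition Q_of :: "('r,'c) voc \<Rightarrow> ('a,'r,'c) struc set \<Rightarrow> ('a,'r,'c) struc set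
    \<Rightarrow> ('r,'c) fm \<Rightarrow> ('a,'r,'c) struc set" where
  "Q_of \<sigma> D C \<phi> = {A \<in> D. \<exists>B\<in>C. sdom B = sdom A \<and> models (expand \<sigma> A B) \<phi>}"

definition inv_tp :: "logic \<Rightarrow> nat \<Rightarrow> ('r,'c) voc \<Rightarrow> ('r,'c) voc \<Rightarrow> ('a,'r,'c) struc set
    \<Rightarrow> ('a,'r,'c) struc set \<Rightarrow> ('a,'r,'c) struc \<Rightarrow> ('r,'c) fm set" where
  "inv_tp L k \<sigma> \<sigma>' D C A = {\<phi>. is_sentence L k (voc_union \<sigma> \<sigma>') \<phi> \<and> C_invariant \<sigma> D C \<phi> \<and> A \<in> Q_of \<sigma> D C \<phi>}"

text \<open>\<open>\<psi>\<close> is the (finite, up to equivalence) disjunction of the type sentences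
 \<open>tp^k_\<L>(A',B')\<close> over all k-flips (A',B') of (A,B): a finite list of type sentences
 of flips, covering the type of every flip.\<close>
definition is_psi :: "logic \<Rightarrow> nat \<Rightarrow> ('r,'c) voc \<Rightarrow> ('r,'c) voc \<Rightarrow> ('a,'r,'c) struc set
    \<Rightarrow> ('a,'r,'c) struc set \<Rightarrow> ('a,'r,'c) struc \<Rightarrow> ('a,'r,'c) struc \<Rightarrow> ('r,'c) fm \<Rightarrow> bool" where
  "is_psi L k \<sigma> \<sigma>' D C A B \<psi> \<longleftrightarrow>
     (\<exists>\<chi>s. \<psi> = disj_list \<chi>s
       \<and> (\<forall>\<chi>\<in>set \<chi>s. \<exists>p. is_flip L k \<sigma> \<sigma>' D C (A, B) p
                          \<and> type_sentence L k (voc_union \<sigma> \<sigma>') (expand \<sigma> (fst p) (snd p)) \<chi>)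
       \<and> (\<forall>p. is_flip L k \<sigma> \<sigma>' D C (A, B) p \<longrightarrow>
             (\<exists>\<chi>\<in>set \<chi>s. type_sentence L k (voc_union \<sigma> \<sigma>') (expand \<sigma> (fst p) (snd p)) \<chi>)))"

definition psi :: "logic \<Rightarrow> nat \<Rightarrow> ('r,'c) voc \<Rightarrow> ('r,'c) voc \<Rightarrow> ('a,'r,'c) struc set
    \<Rightarrow> ('a,'r,'c) struc set \<Rightarrow> ('a,'r,'c) struc \<Rightarrow> ('a,'r,'c) struc \<Rightarrow> ('r,'c) fm" where
  "psi L k \<sigma> \<sigma>' D C A B = (SOME \<psi>. is_psi L k \<sigma> \<sigma>' D C A B \<psi>)"

end

theory Submission
  imports Defs
begin


fun rnt :: "(nat \<Rightarrow> nat) \<Rightarrow> 'c trm \<Rightarrow> 'c trm" where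
  "rnt p (Var i) = Var (p i)" | "rnt p (Cst c) = Cst c"

fun rn1 :: "(nat \<Rightarrow> nat) \<Rightarrow> ('r,'c) fm \<Rightarrow> ('r,'c) fm" where
  "rn1 p Top = Top"
| "rn1 p (Eq s t) = Eq (rnt p s) (rnt p t)"
| "rn1 p (Rel R ts) = Rel R (map (rnt p) ts)"
| "rn1 p (Mem t X) = Mem (rnt p t) X"
| "rn1 p (Neg \<phi>) = Neg (rn1 p \<phi>)"
| "rn1 p (Conj \<phi> \<psi>) = Conj (rn1 p \<phi>) (rn1 p \<psi>)"
| "rn1 p (Disj \<phi> \<psi>) = Disj (rn1 p \<phi>) (rn1 p \<psi>)"
| "rn1 p (Ex x \<phi>) = Ex (p x) (rn1 p \<phi>)"
| "rn1 p (All x \<phi>) = All (p x) (rn1 p \<phi>)"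
| "rn1 p (ExS X \<phi>) = ExS X (rn1 p \<phi>)"
| "rn1 p (AllS X \<phi>) = AllS X (rn1 p \<phi>)"

fun rn2 :: "(nat \<Rightarrow> nat) \<Rightarrow> ('r,'c) fm \<Rightarrow> ('r,'c) fm" where
  "rn2 p Top = Top"
| "rn2 p (Eq s t) = Eq s t"
| "rn2 p (Rel R ts) = Rel R ts"
| "rn2 p (Mem t X) = Mem t (p X)"
| "rn2 p (Neg \<phi>) = Neg (rn2 p \<phi>)"
| "rn2 p (Conj \<phi> \<psi>) = Conj (rn2 p \<phi>) (rn2 p \<psi>)"
| "rn2 p (Disj \<phi> \<psi>) = Disj (rn2 p \<phi>) (rn2 p \<psi>)"
| "rn2 p (Ex x \<phi>) = Ex x (rn2 p \<phi>)"
| "rn2 p (All x \<phi>) = All x (rn2 p \<phi>)"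
| "rn2 p (ExS X \<phi>) = ExS (p X) (rn2 p \<phi>)"
| "rn2 p (AllS X \<phi>) = AllS (p X) (rn2 p \<phi>)"

lemma teval_rnt: "teval M v \<circ> rnt p = teval M (v \<circ> p)"
  by (rule ext, case_tac x) auto

lemma upd_comp: "inj p \<Longrightarrow> (v(p x := a)) \<circ> p = (v \<circ> p)(x := a)"
  by (auto simp: fun_eq_iff inj_eq)

lemma sat_rn1: "inj p \<Longrightarrow> sat M v V (rn1 p \<phi>) = sat M (v \<circ> p) V \<phi>"
proof (induction \<phi> arbitrary: v V)
  case (Eq s t) then show ?case by (cases s; cases t) auto
next
  case (Mem t X) then show ?case by (cases t) auto
qed (simp_all add: teval_rnt upd_comp)

lemma sat_rn2: "inj p \<Longrightarrow> sat M v V (rn2 p \<phi>) = sat M v (V \<circ> p) \<phi>"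
  by (induction \<phi> arbitrary: v V) (simp_all add: upd_comp)

lemma tvars_rnt: "tvars (rnt p t) = p ` tvars t" by (cases t) auto
lemma tconsts_rnt: "tconsts (rnt p t) = tconsts t" by (cases t) auto

lemma fv1_rn1: "inj p \<Longrightarrow> fv1 (rn1 p \<phi>) = p ` fv1 \<phi>"
  by (induction \<phi>) (auto simp: tvars_rnt inj_eq)
lemma fv2_rn1: "fv2 (rn1 p \<phi>) = fv2 \<phi>" by (induction \<phi>) auto
lemma fv1_rn2: "fv1 (rn2 p \<phi>) = fv1 \<phi>" by (induction \<phi>) auto
lemma fv2_rn2: "inj p \<Longrightarrow> fv2 (rn2 p \<phi>) = p ` fv2 \<phi>"
  by (induction \<phi>) (auto simp: inj_eq)
lemma qr_rn1: "qr (rn1 p \<phi>) = qr \<phi>" by (induction \<phi>) auto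
lemma qr_rn2: "qr (rn2 p \<phi>) = qr \<phi>" by (induction \<phi>) auto
lemma FO_rn1: "is_FO (rn1 p \<phi>) = is_FO \<phi>" by (induction \<phi>) auto
lemma FO_rn2: "is_FO (rn2 p \<phi>) = is_FO \<phi>" by (induction \<phi>) auto
lemma voc_rn1: "in_voc \<tau> (rn1 p \<phi>) = in_voc \<tau> \<phi>" by (induction \<phi>) (auto simp: tconsts_rnt)
lemma voc_rn2: "in_voc \<tau> (rn2 p \<phi>) = in_voc \<tau> \<phi>" by (induction \<phi>) auto

lemma teval_cong: "(\<forall>i\<in>tvars t. v i = v' i) \<Longrightarrow> teval M v t = teval M v' t"
  by (cases t) auto

lemma sat_cong: "(\<forall>i\<in>fv1 \<phi>. v i = v' i) \<Longrightarrow> (\<forall>X\<in>fv2 \<phi>. V X = V' X) \<Longrightarrow> sat M v V \<phi> = sat M v' V' \<phi>"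
proof (induction \<phi> arbitrary: v v' V V')
  case (Eq s t)
  have "teval M v s = teval M v' s" "teval M v t = teval M v' t"
    using Eq by (auto intro: teval_cong)
  then show ?case by simp
next
  case (Rel R ts)
  have "map (teval M v) ts = map (teval M v') ts"
    using Rel by (intro map_cong refl teval_cong) auto
  then show ?case by (simp only: sat.simps)
next
  case (Mem t X)
  have "teval M v t = teval M v' t"
    using Mem by (auto intro: teval_cong)
  then show ?case using Mem by simp
next
  case (Conj a b)
  have "sat M v V a = sat M v' V' a" "sat M v V b = sat M v' V' b"
    using Conj.prems by (intro Conj.IH; auto)+
  then show ?case by simp
next
  case (Disj a b)
  have "sat M v V a = sat M v' V' a" "sat M v V b = sat M v' V' b"
    using Disj.prems by (intro Disj.IH; auto)+
  then show ?case by simp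
next
  case (Ex x \<phi>)
  have "\<And>a. sat M (v(x:=a)) V \<phi> = sat M (v'(x:=a)) V' \<phi>"
    using Ex.prems by (intro Ex.IH) auto
  then show ?case by simp
next
  case (All x \<phi>)
  have "\<And>a. sat M (v(x:=a)) V \<phi> = sat M (v'(x:=a)) V' \<phi>"
    using All.prems by (intro All.IH) auto
  then show ?case by simp
next
  case (ExS X \<phi>)
  have "\<And>S. sat M v (V(X:=S)) \<phi> = sat M v' (V'(X:=S)) \<phi>"
    using ExS.prems by (intro ExS.IH) auto
  then show ?case by simp
next
  case (AllS X \<phi>)
  have "\<And>S. sat M v (V(X:=S)) \<phi> = sat M v' (V'(X:=S)) \<phi>"
    using AllS.prems by (intro AllS.IH) auto
  then show ?case by simp
qed auto

definition sw :: "nat \<Rightarrow> nat \<Rightarrow> nat \<Rightarrow> nat" where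
  "sw a b y = (if y = a then b else if y = b then a else y)"

lemma inj_sw: "inj (sw a b)" unfolding inj_def sw_def by auto

lemma sred1:
  assumes "fv1 \<psi> \<subseteq> insert x V1" "x0 \<notin> V1" "x \<notin> insert x0 V1"
  shows "sat M (v(x:=a)) V \<psi> = sat M (v(x0:=a)) V (rn1 (sw x x0) \<psi>)"
    unfolding sat_rn1[OF inj_sw]
    by (rule sat_cong) (use assms in \<open>auto simp: sw_def\<close>)

lemma sred2:
  assumes "fv2 \<psi> \<subseteq> insert X V2" "X0 \<notin> V2" "X \<notin> insert X0 V2"
  shows "sat M v (V(X:=S)) \<psi> = sat M v (V(X0:=S)) (rn2 (sw X X0) \<psi>)"
    unfolding sat_rn2[OF inj_sw]
    by (rule sat_cong) (use assms in \<open>auto simp: sw_def\<close>)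

lemma red1:
  fixes \<psi> :: "('r,'c) fm"
  assumes "fv1 \<psi> \<subseteq> insert x V1" "x0 \<notin> V1"
  shows "\<exists>x' \<psi>'. x' \<in> insert x0 V1 \<and> qr \<psi>' = qr \<psi> \<and> is_FO \<psi>' = is_FO \<psi> \<and> in_voc \<tau> \<psi>' = in_voc \<tau> \<psi>
     \<and> fv1 \<psi>' \<subseteq> insert x0 V1 \<and> fv2 \<psi>' = fv2 \<psi>
     \<and> (\<forall>(M::('a,'r,'c) struc) v V a. sat M (v(x:=a)) V \<psi> = sat M (v(x':=a)) V \<psi>')"
proof cases
  assume "x \<in> insert x0 V1"
  then show ?thesis using assms by (intro exI[of _ x] exI[of _ \<psi>]) auto
next
  assume nx: "x \<notin> insert x0 V1"
  let ?p = "sw x x0"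
  have fv: "fv1 (rn1 ?p \<psi>) \<subseteq> insert x0 V1"
    using assms nx by (auto simp: fv1_rn1[OF inj_sw] sw_def)
  note s = sred1[OF assms nx]
  show ?thesis
    by (intro exI[of _ x0] exI[of _ "rn1 ?p \<psi>"])
      (use fv in \<open>auto simp: s qr_rn1 FO_rn1 voc_rn1 fv2_rn1\<close>)
qed

lemma red2:
  fixes \<psi> :: "('r,'c) fm"
  assumes "fv2 \<psi> \<subseteq> insert X V2" "X0 \<notin> V2"
  shows "\<exists>X' \<psi>'. X' \<in> insert X0 V2 \<and> qr \<psi>' = qr \<psi> \<and> is_FO \<psi>' = is_FO \<psi> \<and> in_voc \<tau> \<psi>' = in_voc \<tau> \<psi>
     \<and> fv2 \<psi>' \<subseteq> insert X0 V2 \<and> fv1 \<psi>' = fv1 \<psi>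
     \<and> (\<forall>(M::('a,'r,'c) struc) v V S. sat M v (V(X:=S)) \<psi> = sat M v (V(X':=S)) \<psi>')"
proof cases
  assume "X \<in> insert X0 V2"
  then show ?thesis using assms by (intro exI[of _ X] exI[of _ \<psi>]) auto
next
  assume nx: "X \<notin> insert X0 V2"
  let ?p = "sw X X0"
  have fv: "fv2 (rn2 ?p \<psi>) \<subseteq> insert X0 V2"
    using assms nx by (auto simp: fv2_rn2[OF inj_sw] sw_def)
  note s = sred2[OF assms nx]
  show ?thesis
    by (intro exI[of _ X0] exI[of _ "rn2 ?p \<psi>"])
      (use fv in \<open>auto simp: s qr_rn2 FO_rn2 voc_rn2 fv1_rn2\<close>)
qed



definition ok :: "logic \<Rightarrow> nat \<Rightarrow> ('r,'c) voc \<Rightarrow> nat set \<Rightarrow> nat set \<Rightarrow> ('r,'c) fm \<Rightarrow> bool" where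
  "ok L k \<tau> V1 V2 \<phi> \<longleftrightarrow> in_logic L \<phi> \<and> qr \<phi> \<le> k \<and> fv1 \<phi> \<subseteq> V1 \<and> fv2 \<phi> \<subseteq> V2 \<and> in_voc \<tau> \<phi>"

definition ftp :: "logic \<Rightarrow> nat \<Rightarrow> ('r,'c) voc \<Rightarrow> nat set \<Rightarrow> nat set \<Rightarrow> ('a,'r,'c) struc
   \<Rightarrow> (nat \<Rightarrow> 'a) \<Rightarrow> (nat \<Rightarrow> 'a set) \<Rightarrow> ('r,'c) fm set" where
  "ftp L k \<tau> V1 V2 M v V = {\<phi>. ok L k \<tau> V1 V2 \<phi> \<and> sat M v V \<phi>}"

fun is_atom :: "('r,'c) fm \<Rightarrow> bool" where
  "is_atom Top = True" | "is_atom (Eq s t) = True" | "is_atom (Rel R ts) = True"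
| "is_atom (Mem t X) = True" | "is_atom _ = False"

definition AT :: "('r,'c) voc \<Rightarrow> nat set \<Rightarrow> nat set \<Rightarrow> ('r,'c) fm set" where
  "AT \<tau> V1 V2 = {\<phi>. is_atom \<phi> \<and> fv1 \<phi> \<subseteq> V1 \<and> fv2 \<phi> \<subseteq> V2 \<and> in_voc \<tau> \<phi>}"

definition atp :: "('r,'c) voc \<Rightarrow> nat set \<Rightarrow> nat set \<Rightarrow> ('a,'r,'c) struc
   \<Rightarrow> (nat \<Rightarrow> 'a) \<Rightarrow> (nat \<Rightarrow> 'a set) \<Rightarrow> ('r,'c) fm set" where
  "atp \<tau> V1 V2 M v V = {\<phi> \<in> AT \<tau> V1 V2. sat M v V \<phi>}"

definition D1 where
  "D1 L j \<tau> V1 V2 x0 M v V = {(x, ftp L j \<tau> (insert x0 V1) V2 M (v(x:=a)) V) | x a. x \<in> insert x0 V1 \<and> a \<in> sdom M}"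

definition D2 where
  "D2 L j \<tau> V1 V2 X0 M v V = {(X, ftp L j \<tau> V1 (insert X0 V2) M v (V(X:=S))) | X S. X \<in> insert X0 V2 \<and> S \<subseteq> sdom M}"

lemma atp_eq:
  assumes "atp \<tau> V1 V2 M v V = atp \<tau> V1 V2 M' v' V'" "is_atom \<phi>" "ok L k \<tau> V1 V2 \<phi>"
  shows "sat M v V \<phi> = sat M' v' V' \<phi>"
proof -
  have "\<phi> \<in> AT \<tau> V1 V2" using assms(2,3) by (auto simp: AT_def ok_def)
  moreover have "(\<phi> \<in> atp \<tau> V1 V2 M v V) = (\<phi> \<in> atp \<tau> V1 V2 M' v' V')" using assms(1) by simp
  ultimately show ?thesis by (simp add: atp_def)
qed

lemma ok_Neg[simp]: "ok L k \<tau> V1 V2 (Neg \<phi>) = ok L k \<tau> V1 V2 \<phi>"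
  by (simp add: ok_def in_logic_def)
lemma ok_Conj[simp]: "ok L k \<tau> V1 V2 (Conj \<phi> \<psi>) = (ok L k \<tau> V1 V2 \<phi> \<and> ok L k \<tau> V1 V2 \<psi>)"
  by (auto simp: ok_def in_logic_def)
lemma ok_Disj[simp]: "ok L k \<tau> V1 V2 (Disj \<phi> \<psi>) = (ok L k \<tau> V1 V2 \<phi> \<and> ok L k \<tau> V1 V2 \<psi>)"
  by (auto simp: ok_def in_logic_def)

lemma det0:
  assumes ea: "atp \<tau> V1 V2 M v V = atp \<tau> V1 V2 M' v' V'"
  shows "ok L 0 \<tau> V1 V2 \<phi> \<Longrightarrow> sat M v V \<phi> = sat M' v' V' \<phi>"
proof (induction \<phi>)
  case Top then show ?case by simp
next
  case (Eq s t) then show ?case by (intro atp_eq[OF ea]) auto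
next
  case (Rel R ts) then show ?case by (intro atp_eq[OF ea]) auto
next
  case (Mem t X) then show ?case by (intro atp_eq[OF ea]) auto
next
  case (Ex x \<psi>) then show ?case by (simp add: ok_def)
next
  case (All x \<psi>) then show ?case by (simp add: ok_def)
next
  case (ExS x \<psi>) then show ?case by (simp add: ok_def)
next
  case (AllS x \<psi>) then show ?case by (simp add: ok_def)
qed simp_all

lemma ex1:
  fixes \<psi> :: "('r,'c) fm"
  assumes "ok L (Suc j) \<tau> V1 V2 (Ex x \<psi>)" "x0 \<notin> V1"
  shows "\<exists>x' \<psi>'. x' \<in> insert x0 V1 \<and> ok L j \<tau> (insert x0 V1) V2 \<psi>'
     \<and> (\<forall>(M::('a,'r,'c) struc) v V a. sat M (v(x:=a)) V \<psi> = sat M (v(x':=a)) V \<psi>')"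
proof -
  have "fv1 \<psi> \<subseteq> insert x V1" using assms(1) by (auto simp: ok_def)
  from red1[OF this assms(2), where \<tau>=\<tau>] obtain x' \<psi>' where
    h: "x' \<in> insert x0 V1 \<and> qr \<psi>' = qr \<psi> \<and> is_FO \<psi>' = is_FO \<psi> \<and> in_voc \<tau> \<psi>' = in_voc \<tau> \<psi>
     \<and> fv1 \<psi>' \<subseteq> insert x0 V1 \<and> fv2 \<psi>' = fv2 \<psi>
     \<and> (\<forall>(M::('a,'r,'c) struc) v V a. sat M (v(x:=a)) V \<psi> = sat M (v(x':=a)) V \<psi>')" by (elim exE)
  note h7 = h[THEN conjunct2, THEN conjunct2, THEN conjunct2, THEN conjunct2, THEN conjunct2, THEN conjunct2]
  have ok: "ok L j \<tau> (insert x0 V1) V2 \<psi>'"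
    using h[THEN conjunct2] assms(1) unfolding ok_def in_logic_def by (simp del: fun_upd_apply)
  show ?thesis
    apply (rule exI[of _ x'])
    apply (rule exI[of _ \<psi>'])
    by (rule conjI[OF h[THEN conjunct1] conjI[OF ok h7]])
qed

lemma all1:
  fixes \<psi> :: "('r,'c) fm"
  assumes "ok L (Suc j) \<tau> V1 V2 (All x \<psi>)" "x0 \<notin> V1"
  shows "\<exists>x' \<psi>'. x' \<in> insert x0 V1 \<and> ok L j \<tau> (insert x0 V1) V2 \<psi>'
     \<and> (\<forall>(M::('a,'r,'c) struc) v V a. sat M (v(x:=a)) V \<psi> = sat M (v(x':=a)) V \<psi>')"
proof -
  have "ok L (Suc j) \<tau> V1 V2 (Ex x \<psi>)" using assms(1) by (auto simp: ok_def in_logic_def)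
  then show ?thesis by (rule ex1[OF _ assms(2)])
qed

lemma ex2:
  fixes \<psi> :: "('r,'c) fm"
  assumes "ok L (Suc j) \<tau> V1 V2 (ExS X \<psi>)" "X0 \<notin> V2"
  shows "\<exists>X' \<psi>'. X' \<in> insert X0 V2 \<and> ok L j \<tau> V1 (insert X0 V2) \<psi>'
     \<and> (\<forall>(M::('a,'r,'c) struc) v V S. sat M v (V(X:=S)) \<psi> = sat M v (V(X':=S)) \<psi>')"
proof -
  have "fv2 \<psi> \<subseteq> insert X V2" using assms(1) by (auto simp: ok_def)
  from red2[OF this assms(2), where \<tau>=\<tau>] obtain X' \<psi>' where
    h: "X' \<in> insert X0 V2 \<and> qr \<psi>' = qr \<psi> \<and> is_FO \<psi>' = is_FO \<psi> \<and> in_voc \<tau> \<psi>' = in_voc \<tau> \<psi>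
     \<and> fv2 \<psi>' \<subseteq> insert X0 V2 \<and> fv1 \<psi>' = fv1 \<psi>
     \<and> (\<forall>(M::('a,'r,'c) struc) v V S. sat M v (V(X:=S)) \<psi> = sat M v (V(X':=S)) \<psi>')" by (elim exE)
  note h7 = h[THEN conjunct2, THEN conjunct2, THEN conjunct2, THEN conjunct2, THEN conjunct2, THEN conjunct2]
  have ok: "ok L j \<tau> V1 (insert X0 V2) \<psi>'"
    using h[THEN conjunct2] assms(1) unfolding ok_def in_logic_def by (simp del: fun_upd_apply)
  show ?thesis
    apply (rule exI[of _ X'])
    apply (rule exI[of _ \<psi>'])
    by (rule conjI[OF h[THEN conjunct1] conjI[OF ok h7]])
qed

lemma all2:
  fixes \<psi> :: "('r,'c) fm"
  assumes "ok L (Suc j) \<tau> V1 V2 (AllS X \<psi>)" "X0 \<notin> V2"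
  shows "\<exists>X' \<psi>'. X' \<in> insert X0 V2 \<and> ok L j \<tau> V1 (insert X0 V2) \<psi>'
     \<and> (\<forall>(M::('a,'r,'c) struc) v V S. sat M v (V(X:=S)) \<psi> = sat M v (V(X':=S)) \<psi>')"
proof -
  have "ok L (Suc j) \<tau> V1 V2 (ExS X \<psi>)" using assms(1) by (auto simp: ok_def in_logic_def)
  then show ?thesis by (rule ex2[OF _ assms(2)])
qed

lemma D1_mem:
  assumes "x' \<in> insert x0 V1" "ok L j \<tau> (insert x0 V1) V2 \<psi>'"
  shows "(\<exists>a\<in>sdom M. sat M (v(x':=a)) V \<psi>') = (\<exists>t. (x', t) \<in> D1 L j \<tau> V1 V2 x0 M v V \<and> \<psi>' \<in> t)"
    and "(\<forall>a\<in>sdom M. sat M (v(x':=a)) V \<psi>') = (\<forall>t. (x', t) \<in> D1 L j \<tau> V1 V2 x0 M v V \<longrightarrow> \<psi>' \<in> t)"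
  using assms by (auto simp: D1_def ftp_def)

lemma D2_mem:
  assumes "X' \<in> insert X0 V2" "ok L j \<tau> V1 (insert X0 V2) \<psi>'"
  shows "(\<exists>S. S \<subseteq> sdom M \<and> sat M v (V(X':=S)) \<psi>') = (\<exists>t. (X', t) \<in> D2 L j \<tau> V1 V2 X0 M v V \<and> \<psi>' \<in> t)"
    and "(\<forall>S. S \<subseteq> sdom M \<longrightarrow> sat M v (V(X':=S)) \<psi>') = (\<forall>t. (X', t) \<in> D2 L j \<tau> V1 V2 X0 M v V \<longrightarrow> \<psi>' \<in> t)"
  using assms by (auto simp: D2_def ftp_def)

lemma det:
  fixes M M' :: "('a,'r,'c) struc"
  assumes x0: "x0 \<notin> V1" and X0: "X0 \<notin> V2"
    and ea: "atp \<tau> V1 V2 M v V = atp \<tau> V1 V2 M' v' V'"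
    and e1: "D1 L j \<tau> V1 V2 x0 M v V = D1 L j \<tau> V1 V2 x0 M' v' V'"
    and e2: "D2 L j \<tau> V1 V2 X0 M v V = D2 L j \<tau> V1 V2 X0 M' v' V'"
  shows "ok L (Suc j) \<tau> V1 V2 \<phi> \<Longrightarrow> sat M v V \<phi> = sat M' v' V' \<phi>"
proof (induction \<phi>)
  case Top then show ?case by simp
next
  case (Eq s t) then show ?case by (intro atp_eq[OF ea]) auto
next
  case (Rel R ts) then show ?case by (intro atp_eq[OF ea]) auto
next
  case (Mem t X) then show ?case by (intro atp_eq[OF ea]) auto
next
  case (Ex x \<psi>)
  obtain x' \<psi>' where h: "x' \<in> insert x0 V1 \<and> ok L j \<tau> (insert x0 V1) V2 \<psi>' \<and> (\<forall>(M::('a,'r,'c) struc) v V a. sat M (v(x:=a)) V \<psi> = sat M (v(x':=a)) V \<psi>')"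
    using ex1[OF Ex.prems x0] by (elim exE)
  show ?case using h[THEN conjunct2, THEN conjunct2] e1 by (simp add: D1_mem(1)[OF h[THEN conjunct1] h[THEN conjunct2, THEN conjunct1]])
next
  case (All x \<psi>)
  obtain x' \<psi>' where h: "x' \<in> insert x0 V1 \<and> ok L j \<tau> (insert x0 V1) V2 \<psi>' \<and> (\<forall>(M::('a,'r,'c) struc) v V a. sat M (v(x:=a)) V \<psi> = sat M (v(x':=a)) V \<psi>')"
    using all1[OF All.prems x0] by (elim exE)
  show ?case using h[THEN conjunct2, THEN conjunct2] e1 by (simp add: D1_mem(2)[OF h[THEN conjunct1] h[THEN conjunct2, THEN conjunct1]])
next
  case (ExS X \<psi>)
  obtain X' \<psi>' where h: "X' \<in> insert X0 V2 \<and> ok L j \<tau> V1 (insert X0 V2) \<psi>' \<and> (\<forall>(M::('a,'r,'c) struc) v V S. sat M v (V(X:=S)) \<psi> = sat M v (V(X':=S)) \<psi>')"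
    using ex2[OF ExS.prems X0] by (elim exE)
  show ?case using h[THEN conjunct2, THEN conjunct2] e2 by (simp add: D2_mem(1)[OF h[THEN conjunct1] h[THEN conjunct2, THEN conjunct1]])
next
  case (AllS X \<psi>)
  obtain X' \<psi>' where h: "X' \<in> insert X0 V2 \<and> ok L j \<tau> V1 (insert X0 V2) \<psi>' \<and> (\<forall>(M::('a,'r,'c) struc) v V S. sat M v (V(X:=S)) \<psi> = sat M v (V(X':=S)) \<psi>')"
    using all2[OF AllS.prems X0] by (elim exE)
  show ?case using h[THEN conjunct2, THEN conjunct2] e2 by (simp add: D2_mem(2)[OF h[THEN conjunct1] h[THEN conjunct2, THEN conjunct1]])
qed simp_all



lemma fin_via:
  assumes f: "finite (range F)" and d: "\<And>s s'. F s = F s' \<Longrightarrow> G s = G s'"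
  shows "finite (range G)"
proof -
  have "range G \<subseteq> (\<lambda>r. G (SOME s. F s = r)) ` range F"
  proof
    fix y assume "y \<in> range G"
    then obtain s where y: "y = G s" by auto
    have "F (SOME s'. F s' = F s) = F s" by (rule someI) (rule refl)
    hence "G (SOME s'. F s' = F s) = G s" by (rule d)
    then show "y \<in> (\<lambda>r. G (SOME s. F s = r)) ` range F" using y by (intro image_eqI[of _ _ "F s"]) auto
  qed
  then show ?thesis using f by (rule finite_subset[OF _ finite_imageI])
qed

lemma fin_AT:
  assumes "voc_finite \<tau>" "finite V1" "finite V2"
  shows "finite (AT \<tau> V1 V2)"
proof -
  let ?T = "Var ` V1 \<union> Cst ` consts_of \<tau>"
  have T: "finite ?T" using assms by (auto simp: voc_finite_def)
  have fr: "finite (rels \<tau>)" using assms by (auto simp: voc_finite_def)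
  define N where "N = Max (snd ` rels \<tau>)"
  have tin: "t \<in> ?T" if "tvars t \<subseteq> V1" "tconsts t \<subseteq> consts_of \<tau>" for t
    using that by (cases t) auto
  let ?LL = "{ts. set ts \<subseteq> ?T \<and> length ts \<le> N}"
  have fLL: "finite ?LL" using T by (rule finite_lists_length_le)
  have "AT \<tau> V1 V2 \<subseteq> {Top} \<union> {Eq s t | s t. s \<in> ?T \<and> t \<in> ?T}
      \<union> {Rel R ts | R ts. R \<in> rels \<tau> \<and> ts \<in> ?LL} \<union> {Mem t X | t X. t \<in> ?T \<and> X \<in> V2}"
  proof
    fix \<phi> assume a: "\<phi> \<in> AT \<tau> V1 V2"
    show "\<phi> \<in> {Top} \<union> {Eq s t | s t. s \<in> ?T \<and> t \<in> ?T}
      \<union> {Rel R ts | R ts. R \<in> rels \<tau> \<and> ts \<in> ?LL} \<union> {Mem t X | t X. t \<in> ?T \<and> X \<in> V2}"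
    proof (cases \<phi>)
      case (Eq s t) then show ?thesis using a tin[of s] tin[of t] by (auto simp: AT_def)
    next
      case (Rel R ts)
      have "set ts \<subseteq> ?T"
      proof
        fix t assume "t \<in> set ts"
        then show "t \<in> ?T" using a Rel by (intro tin) (auto simp: AT_def)
      qed
      moreover have "length ts \<le> N" using a Rel fr unfolding N_def by (auto simp: AT_def intro!: Max_ge)
      ultimately show ?thesis using a Rel by (cases R) (auto simp: AT_def)
    next
      case (Mem t X) then show ?thesis using a tin[of t] by (auto simp: AT_def)
    qed (use a in \<open>auto simp: AT_def\<close>)
  qed
  moreover have "finite {Eq s t | s t. s \<in> ?T \<and> t \<in> ?T}" using T by (intro finite_image_set2) auto
  moreover have "finite {Rel R ts | R ts. R \<in> rels \<tau> \<and> ts \<in> ?LL}" using fr fLL by (intro finite_image_set2) auto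
  moreover have "finite {Mem t X | t X. t \<in> ?T \<and> X \<in> V2}" using T assms(3) by (intro finite_image_set2) auto
  ultimately show ?thesis by (elim finite_subset) simp
qed

lemma fin_types:
  assumes vf: "voc_finite \<tau>"
  shows "finite V1 \<Longrightarrow> finite V2 \<Longrightarrow>
    finite (range (\<lambda>(M::('a,'r,'c) struc, v, V). ftp L k \<tau> V1 V2 M v V))"
proof (induction k arbitrary: V1 V2)
  case 0
  show ?case
  proof (rule fin_via[where F = "\<lambda>(M::('a,'r,'c) struc, v, V). atp \<tau> V1 V2 M v V"])
    have "range (\<lambda>(M::('a,'r,'c) struc, v, V). atp \<tau> V1 V2 M v V) \<subseteq> Pow (AT \<tau> V1 V2)"
      by (auto simp: atp_def)
    then show "finite (range (\<lambda>(M::('a,'r,'c) struc, v, V). atp \<tau> V1 V2 M v V))"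
      using fin_AT[OF vf 0] by (meson finite_Pow_iff finite_subset)
  next
    fix s s' :: "('a,'r,'c) struc \<times> (nat \<Rightarrow> 'a) \<times> (nat \<Rightarrow> 'a set)"
    assume e: "(case s of (M, v, V) \<Rightarrow> atp \<tau> V1 V2 M v V) = (case s' of (M, v, V) \<Rightarrow> atp \<tau> V1 V2 M v V)"
    obtain M v V where s: "s = (M,v,V)" by (cases s) auto
    obtain M' v' V' where s': "s' = (M',v',V')" by (cases s') auto
    have "atp \<tau> V1 V2 M v V = atp \<tau> V1 V2 M' v' V'" using e s s' by simp
    then have "ftp L 0 \<tau> V1 V2 M v V = ftp L 0 \<tau> V1 V2 M' v' V'"
      unfolding ftp_def using det0 by blast
    then show "(case s of (M, v, V) \<Rightarrow> ftp L 0 \<tau> V1 V2 M v V) = (case s' of (M, v, V) \<Rightarrow> ftp L 0 \<tau> V1 V2 M v V)"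
      using s s' by simp
  qed
next
  case (Suc j)
  obtain x0 where x0: "x0 \<notin> V1" using Suc.prems(1) ex_new_if_finite[OF infinite_UNIV_nat] by blast
  obtain X0 where X0: "X0 \<notin> V2" using Suc.prems(2) ex_new_if_finite[OF infinite_UNIV_nat] by blast
  define R1 where "R1 = range (\<lambda>(M::('a,'r,'c) struc, v, V). ftp L j \<tau> (insert x0 V1) V2 M v V)"
  define R2 where "R2 = range (\<lambda>(M::('a,'r,'c) struc, v, V). ftp L j \<tau> V1 (insert X0 V2) M v V)"
  have fR1: "finite R1" unfolding R1_def using Suc.IH Suc.prems by simp
  have fR2: "finite R2" unfolding R2_def using Suc.IH Suc.prems by simp
  define F where "F = (\<lambda>(M::('a,'r,'c) struc, v, V). (atp \<tau> V1 V2 M v V, D1 L j \<tau> V1 V2 x0 M v V, D2 L j \<tau> V1 V2 X0 M v V))"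
  show ?case
  proof (rule fin_via[where F = F])
    have "range F \<subseteq> Pow (AT \<tau> V1 V2) \<times> Pow (insert x0 V1 \<times> R1) \<times> Pow (insert X0 V2 \<times> R2)"
    proof
      fix y assume "y \<in> range F"
      then obtain M v V where y: "y = F (M,v,V)" by auto
      have "atp \<tau> V1 V2 M v V \<subseteq> AT \<tau> V1 V2" by (auto simp: atp_def)
      moreover have "D1 L j \<tau> V1 V2 x0 M v V \<subseteq> insert x0 V1 \<times> R1"
        unfolding D1_def R1_def by (auto intro: rev_image_eqI[of "(M, v(_:=_), V)"])
      moreover have "D2 L j \<tau> V1 V2 X0 M v V \<subseteq> insert X0 V2 \<times> R2"
        unfolding D2_def R2_def by (auto intro: rev_image_eqI[of "(M, v, V(_:=_))"])
      ultimately show "y \<in> Pow (AT \<tau> V1 V2) \<times> Pow (insert x0 V1 \<times> R1) \<times> Pow (insert X0 V2 \<times> R2)"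
        using y F_def by simp
    qed
    then show "finite (range F)"
      using fin_AT[OF vf Suc.prems] fR1 fR2 Suc.prems
      by (meson finite_Pow_iff finite_SigmaI finite_insert finite_subset)
  next
    fix s s' :: "('a,'r,'c) struc \<times> (nat \<Rightarrow> 'a) \<times> (nat \<Rightarrow> 'a set)"
    assume e: "F s = F s'"
    obtain M v V where s: "s = (M,v,V)" by (cases s) auto
    obtain M' v' V' where s': "s' = (M',v',V')" by (cases s') auto
    have e': "atp \<tau> V1 V2 M v V = atp \<tau> V1 V2 M' v' V'" "D1 L j \<tau> V1 V2 x0 M v V = D1 L j \<tau> V1 V2 x0 M' v' V'"
      "D2 L j \<tau> V1 V2 X0 M v V = D2 L j \<tau> V1 V2 X0 M' v' V'" using e s s' F_def by simp_all
    have "ftp L (Suc j) \<tau> V1 V2 M v V = ftp L (Suc j) \<tau> V1 V2 M' v' V'"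
      unfolding ftp_def using det[OF x0 X0 e'] by blast
    then show "(case s of (M, v, V) \<Rightarrow> ftp L (Suc j) \<tau> V1 V2 M v V) = (case s' of (M, v, V) \<Rightarrow> ftp L (Suc j) \<tau> V1 V2 M v V)"
      using s s' by simp
  qed
qed

lemma fin_tp:
  assumes "voc_finite \<tau>"
  shows "finite (range (tp L k \<tau> :: ('a,'r,'c) struc \<Rightarrow> _))"
proof -
  have "range (tp L k \<tau> :: ('a,'r,'c) struc \<Rightarrow> _) \<subseteq> range (\<lambda>(M::('a,'r,'c) struc, v, V). ftp L k \<tau> {} {} M v V)"
  proof
    fix y assume "y \<in> range (tp L k \<tau> :: ('a,'r,'c) struc \<Rightarrow> _)"
    then obtain M :: "('a,'r,'c) struc" where y: "y = tp L k \<tau> M" by auto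
    have "tp L k \<tau> M = ftp L k \<tau> {} {} M (\<lambda>_. undefined) (\<lambda>_. {})"
      by (auto simp: tp_def ftp_def is_sentence_def ok_def models_def)
    then show "y \<in> range (\<lambda>(M::('a,'r,'c) struc, v, V). ftp L k \<tau> {} {} M v V)"
      using y by (intro rev_image_eqI[of "(M, \<lambda>_. undefined, \<lambda>_. {})"]) auto
  qed
  then show ?thesis using fin_types[OF assms, of "{}" "{}" L k] finite_subset by auto
qed



lemma models_conj: "models N (conj_list \<phi>s) = (\<forall>\<phi>\<in>set \<phi>s. models N \<phi>)"
  by (induction \<phi>s) (auto simp: models_def)

lemma models_disj: "models N (disj_list \<phi>s) = (\<exists>\<phi>\<in>set \<phi>s. models N \<phi>)"
  by (induction \<phi>s) (auto simp: models_def)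

lemma sent_conj: "\<forall>\<phi>\<in>set \<phi>s. is_sentence L k \<tau> \<phi> \<Longrightarrow> is_sentence L k \<tau> (conj_list \<phi>s)"
  by (induction \<phi>s) (auto simp: is_sentence_def in_logic_def)

lemma sent_disj: "\<forall>\<phi>\<in>set \<phi>s. is_sentence L k \<tau> \<phi> \<Longrightarrow> is_sentence L k \<tau> (disj_list \<phi>s)"
  by (induction \<phi>s) (auto simp: is_sentence_def in_logic_def)

lemma ts_tp:
  fixes M M' :: "('a,'r,'c) struc"
  shows "tp L k \<tau> M = tp L k \<tau> M' \<Longrightarrow> type_sentence L k \<tau> M \<chi> = type_sentence L k \<tau> M' \<chi>"
  by (simp add: type_sentence_def)

lemma ts_models: "type_sentence L k \<tau> M \<chi> \<Longrightarrow> models M \<chi>"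
  unfolding type_sentence_def by (auto simp: models_conj tp_def)

lemma ts_sent: "type_sentence L k \<tau> M \<chi> \<Longrightarrow> is_sentence L k \<tau> \<chi>"
  unfolding type_sentence_def by (auto intro!: sent_conj simp: tp_def)

lemma ts_ex:
  fixes M :: "('a,'r,'c) struc"
  assumes "voc_finite \<tau>"
  shows "\<exists>\<chi>. type_sentence L k \<tau> M \<chi>"
proof -
  let ?Ty = "range (tp L k \<tau> :: ('a,'r,'c) struc \<Rightarrow> _)"
  let ?tM = "tp L k \<tau> M"
  have fin: "finite ?Ty" by (rule fin_tp[OF assms])
  define \<delta> where "\<delta> t = (if \<exists>\<phi>\<in>?tM. \<phi> \<notin> t then (SOME \<phi>. \<phi> \<in> ?tM \<and> \<phi> \<notin> t)
     else Neg (SOME \<phi>. \<phi> \<in> t \<and> \<phi> \<notin> ?tM))" for t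
  have \<delta>: "\<delta> t \<in> ?tM \<and> \<delta> t \<notin> t" if "t \<in> ?Ty" "t \<noteq> ?tM" for t
  proof (cases "\<exists>\<phi>\<in>?tM. \<phi> \<notin> t")
    case True
    then have "\<exists>\<phi>. \<phi> \<in> ?tM \<and> \<phi> \<notin> t" by blast
    then have "(SOME \<phi>. \<phi> \<in> ?tM \<and> \<phi> \<notin> t) \<in> ?tM \<and> (SOME \<phi>. \<phi> \<in> ?tM \<and> \<phi> \<notin> t) \<notin> t"
      by (rule someI_ex)
    then show ?thesis using True unfolding \<delta>_def by simp
  next
    case False
    then have "\<exists>\<phi>. \<phi> \<in> t \<and> \<phi> \<notin> ?tM" using that(2) by blast
    then have s: "(SOME \<phi>. \<phi> \<in> t \<and> \<phi> \<notin> ?tM) \<in> t \<and> (SOME \<phi>. \<phi> \<in> t \<and> \<phi> \<notin> ?tM) \<notin> ?tM"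
      by (rule someI_ex)
    define \<phi>0 where "\<phi>0 = (SOME \<phi>. \<phi> \<in> t \<and> \<phi> \<notin> ?tM)"
    from that(1) obtain N :: "('a,'r,'c) struc" where N: "t = tp L k \<tau> N" by (rule rangeE)
    have d: "\<delta> t = Neg \<phi>0" using False unfolding \<delta>_def \<phi>0_def by simp
    have a1: "is_sentence L k \<tau> \<phi>0" "models N \<phi>0" "\<not> models M \<phi>0"
      using s N unfolding \<phi>0_def[symmetric] by (auto simp: tp_def)
    have "is_sentence L k \<tau> (Neg \<phi>0)" using a1(1) by (simp add: is_sentence_def in_logic_def)
    moreover have "models M (Neg \<phi>0)" "\<not> models N (Neg \<phi>0)" using a1 by (simp_all add: models_def)
    ultimately show ?thesis using d N by (simp add: tp_def)
  qed
  obtain \<phi>s where \<phi>s: "set \<phi>s = \<delta> ` (?Ty - {?tM})"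
    using finite_list[OF finite_imageI[OF finite_Diff[OF fin]], of \<delta> "{?tM}"] by (elim exE)
  show ?thesis unfolding type_sentence_def
  proof (rule exI[of _ "conj_list \<phi>s"], rule exI[of _ \<phi>s], intro conjI allI impI)
    show "set \<phi>s \<subseteq> ?tM" using \<phi>s \<delta> by auto
    fix N :: "('a,'r,'c) struc"
    assume "models N (conj_list \<phi>s)"
    then have mN: "\<forall>\<phi>\<in>set \<phi>s. models N \<phi>" by (simp add: models_conj)
    show "tp L k \<tau> N = ?tM"
    proof (rule ccontr)
      assume ne: "tp L k \<tau> N \<noteq> ?tM"
      have inT: "tp L k \<tau> N \<in> ?Ty" by simp
      have "\<delta> (tp L k \<tau> N) \<in> set \<phi>s" using \<phi>s ne by auto
      then have "models N (\<delta> (tp L k \<tau> N))" using mN by blast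
      moreover have "\<delta> (tp L k \<tau> N) \<in> ?tM" "\<delta> (tp L k \<tau> N) \<notin> tp L k \<tau> N" using \<delta>[OF inT ne] by auto
      ultimately show False by (auto simp: tp_def)
    qed
  qed (rule refl)
qed



lemma psi_ex:
  fixes A B :: "('a,'r,'c) struc"
  assumes vf: "voc_finite (voc_union \<sigma> \<sigma>')"
  shows "\<exists>\<psi>. is_psi L k \<sigma> \<sigma>' D C A B \<psi>"
proof -
  let ?\<tau> = "voc_union \<sigma> \<sigma>'"
  let ?E = "\<lambda>p. expand \<sigma> (fst p) (snd p)"
  define P where "P = {p. is_flip L k \<sigma> \<sigma>' D C (A, B) p}"
  define Ty where "Ty = (\<lambda>p. tp L k ?\<tau> (?E p)) ` P"
  have fT: "finite Ty"
  proof (rule finite_subset[OF _ fin_tp[OF vf, of L k]])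
    show "Ty \<subseteq> range (tp L k ?\<tau> :: ('a,'r,'c) struc \<Rightarrow> _)" unfolding Ty_def by auto
  qed
  define rep where "rep t = (SOME p. p \<in> P \<and> tp L k ?\<tau> (?E p) = t)" for t
  define f where "f p = (SOME \<chi>. type_sentence L k ?\<tau> (?E p) \<chi>)" for p :: "('a,'r,'c) struc \<times> ('a,'r,'c) struc"
  have fts: "type_sentence L k ?\<tau> (?E p) (f p)" for p :: "('a,'r,'c) struc \<times> ('a,'r,'c) struc"
    unfolding f_def by (rule someI_ex) (rule ts_ex[OF vf])
  have rep: "rep t \<in> P \<and> tp L k ?\<tau> (?E (rep t)) = t" if tT0: "t \<in> Ty" for t
  proof -
    obtain p where p: "t = tp L k ?\<tau> (?E p)" "p \<in> P" using tT0 unfolding Ty_def by (rule imageE)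
    have "\<exists>p. p \<in> P \<and> tp L k ?\<tau> (?E p) = t" using p by (intro exI[of _ p]) simp
    then show ?thesis unfolding rep_def by (rule someI_ex)
  qed
  obtain \<chi>s where \<chi>s: "set \<chi>s = (\<lambda>t. f (rep t)) ` Ty"
    using finite_list[OF finite_imageI[OF fT], of "\<lambda>t. f (rep t)"] by (elim exE)
  show ?thesis unfolding is_psi_def
  proof (rule exI[of _ "disj_list \<chi>s"], rule exI[of _ \<chi>s], intro conjI ballI allI impI)
    fix \<chi> assume "\<chi> \<in> set \<chi>s"
    then obtain t where t: "t \<in> Ty" "\<chi> = f (rep t)" using \<chi>s by auto
    have "rep t \<in> P" using rep[OF t(1)] by simp
    then have "is_flip L k \<sigma> \<sigma>' D C (A, B) (rep t)" unfolding P_def by simp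
    moreover have "type_sentence L k ?\<tau> (?E (rep t)) \<chi>" using fts t(2) by simp
    ultimately show "\<exists>p. is_flip L k \<sigma> \<sigma>' D C (A, B) p \<and> type_sentence L k ?\<tau> (?E p) \<chi>"
      by (intro exI[of _ "rep t"] conjI)
  next
    fix p assume fp: "is_flip L k \<sigma> \<sigma>' D C (A, B) p"
    let ?t = "tp L k ?\<tau> (?E p)"
    have tT: "?t \<in> Ty" unfolding Ty_def P_def using fp by auto
    have "type_sentence L k ?\<tau> (?E p) (f (rep ?t))"
      using fts[of "rep ?t"] ts_tp[of L k ?\<tau> "?E (rep ?t)" "?E p"] rep[OF tT] by simp
    moreover have "f (rep ?t) \<in> set \<chi>s" using \<chi>s tT by simp
    ultimately show "\<exists>\<chi>\<in>set \<chi>s. type_sentence L k ?\<tau> (?E p) \<chi>" by (intro bexI[of _ "f (rep ?t)"])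
  qed (rule refl)
qed

lemma struc_expand:
  "is_struc \<sigma> A \<Longrightarrow> is_struc \<sigma>' B \<Longrightarrow> sdom A = sdom B \<Longrightarrow> is_struc (voc_union \<sigma> \<sigma>') (expand \<sigma> A B)"
  unfolding is_struc_def expand_def voc_union_def rels_def consts_of_def by auto



lemma flip_adm:
  assumes "is_flip L k \<sigma> \<sigma>' D C p0 p" "admissible \<sigma> D C p0"
  shows "admissible \<sigma> D C p"
  using assms(1) unfolding is_flip_def
  by (induction rule: rtranclp_induct) (auto simp: sim_k_def assms(2))

lemma Q_char:
  assumes "admissible \<sigma> D C p" "C_invariant \<sigma> D C \<phi>"
  shows "(fst p \<in> Q_of \<sigma> D C \<phi>) = models (expand \<sigma> (fst p) (snd p)) \<phi>"
proof
  assume "fst p \<in> Q_of \<sigma> D C \<phi>"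
  then obtain B' where B': "B' \<in> C" "sdom B' = sdom (fst p)" "models (expand \<sigma> (fst p) B') \<phi>"
    unfolding Q_of_def by blast
  show "models (expand \<sigma> (fst p) (snd p)) \<phi>"
    using assms B' unfolding C_invariant_def admissible_def by metis
next
  assume "models (expand \<sigma> (fst p) (snd p)) \<phi>"
  then show "fst p \<in> Q_of \<sigma> D C \<phi>" using assms(1) unfolding Q_of_def admissible_def by auto
qed

lemma flip_models:
  assumes "is_flip L k \<sigma> \<sigma>' D C p0 p" "admissible \<sigma> D C p0"
    and "is_sentence L k (voc_union \<sigma> \<sigma>') \<phi>" "C_invariant \<sigma> D C \<phi>"
  shows "models (expand \<sigma> (fst p0) (snd p0)) \<phi> = models (expand \<sigma> (fst p) (snd p)) \<phi>"
  using assms(1) unfolding is_flip_def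
proof (induction rule: rtranclp_induct)
  case base then show ?case by simp
next
  case (step q r)
  have st: "sim_k L k \<sigma> \<sigma>' D C q r" by fact
  then have aq: "admissible \<sigma> D C q" and ar: "admissible \<sigma> D C r" by (auto simp: sim_k_def)
  have "models (expand \<sigma> (fst q) (snd q)) \<phi> = models (expand \<sigma> (fst r) (snd r)) \<phi>"
  proof (cases "fst q = fst r")
    case True
    then show ?thesis using Q_char[OF aq assms(4)] Q_char[OF ar assms(4)] by simp
  next
    case False
    then have "tp L k (voc_union \<sigma> \<sigma>') (expand \<sigma> (fst q) (snd q)) = tp L k (voc_union \<sigma> \<sigma>') (expand \<sigma> (fst r) (snd r))"
      using st by (simp add: sim_k_def)
    then show ?thesis using assms(3) unfolding tp_def by blast
  qed
  then show ?case using step.IH by simp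
qed

theorem proposition3p2:
  fixes L :: logic and k :: nat
    and \<sigma> \<sigma>' :: "('r,'c) voc"
    and D C :: "('a,'r,'c) struc set"
    and A B :: "('a,'r,'c) struc"
  assumes "voc_finite \<sigma>" and "voc_finite \<sigma>'" and "voc_disjoint \<sigma> \<sigma>'"
    and "\<forall>A\<in>D. is_struc \<sigma> A" and "\<forall>B\<in>C. is_struc \<sigma>' B"
    and "A \<in> D" and "B \<in> C" and "sdom A = sdom B"
  shows "(\<forall>A'\<in>D. \<forall>B'\<in>C. sdom A' = sdom B' \<longrightarrow>
            (models (expand \<sigma> A' B') (psi L k \<sigma> \<sigma>' D C A B)
               \<longleftrightarrow> is_flip L k \<sigma> \<sigma>' D C (A, B) (A', B')))
       \<and> is_sentence L k (voc_union \<sigma> \<sigma>') (psi L k \<sigma> \<sigma>' D C A B)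
       \<and> C_invariant \<sigma> D C (psi L k \<sigma> \<sigma>' D C A B)
       \<and> (\<forall>A'\<in>D. inv_tp L k \<sigma> \<sigma>' D C A = inv_tp L k \<sigma> \<sigma>' D C A'
                    \<longleftrightarrow> A' \<in> Q_of \<sigma> D C (psi L k \<sigma> \<sigma>' D C A B))"
proof -
  let ?\<tau> = "voc_union \<sigma> \<sigma>'"
  let ?\<psi> = "psi L k \<sigma> \<sigma>' D C A B"
  let ?E = "\<lambda>p. expand \<sigma> (fst p) (snd p)"
  have vf: "voc_finite ?\<tau>" using assms(1,2)
    by (auto simp: voc_finite_def voc_union_def rels_def consts_of_def)
  have "is_psi L k \<sigma> \<sigma>' D C A B ?\<psi>"
    unfolding psi_def by (rule someI_ex) (rule psi_ex[OF vf])
  then obtain \<chi>s where \<psi>eq: "?\<psi> = disj_list \<chi>s"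
    and h1: "\<forall>\<chi>\<in>set \<chi>s. \<exists>p. is_flip L k \<sigma> \<sigma>' D C (A, B) p \<and> type_sentence L k ?\<tau> (?E p) \<chi>"
    and h2: "\<forall>p. is_flip L k \<sigma> \<sigma>' D C (A, B) p \<longrightarrow> (\<exists>\<chi>\<in>set \<chi>s. type_sentence L k ?\<tau> (?E p) \<chi>)"
    unfolding is_psi_def by (elim exE conjE)
  have adm0: "admissible \<sigma> D C (A, B)" using assms(6-8) by (simp add: admissible_def)
  have P1: "models (expand \<sigma> A' B') ?\<psi> = is_flip L k \<sigma> \<sigma>' D C (A, B) (A', B')"
    if A': "A' \<in> D" and B': "B' \<in> C" and dAB: "sdom A' = sdom B'" for A' B'
  proof
    assume "models (expand \<sigma> A' B') ?\<psi>"
    then obtain \<chi> where \<chi>: "\<chi> \<in> set \<chi>s" "models (expand \<sigma> A' B') \<chi>"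
      unfolding \<psi>eq models_disj by blast
    obtain p where p: "is_flip L k \<sigma> \<sigma>' D C (A, B) p" "type_sentence L k ?\<tau> (?E p) \<chi>"
      using h1 \<chi>(1) by (elim ballE exE conjE) auto
    have st: "is_struc ?\<tau> (expand \<sigma> A' B')"
      using struc_expand[of \<sigma> A' \<sigma>' B'] assms(4,5) A' B' dAB by simp
    have teq: "tp L k ?\<tau> (expand \<sigma> A' B') = tp L k ?\<tau> (?E p)"
      using p(2) st \<chi>(2) unfolding type_sentence_def by auto
    have "sim_k L k \<sigma> \<sigma>' D C p (A', B')"
      unfolding sim_k_def using flip_adm[OF p(1) adm0] A' B' dAB teq
      by (simp add: admissible_def)
    then show "is_flip L k \<sigma> \<sigma>' D C (A, B) (A', B')"
      using p(1) unfolding is_flip_def by (rule rtranclp.rtrancl_into_rtrancl[rotated])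
  next
    assume "is_flip L k \<sigma> \<sigma>' D C (A, B) (A', B')"
    then obtain \<chi> where "\<chi> \<in> set \<chi>s" "type_sentence L k ?\<tau> (?E (A', B')) \<chi>"
      using h2 by blast
    then show "models (expand \<sigma> A' B') ?\<psi>"
      unfolding \<psi>eq models_disj using ts_models by fastforce
  qed
  have P2: "is_sentence L k ?\<tau> ?\<psi>"
    unfolding \<psi>eq
  proof (rule sent_disj, rule ballI)
    fix \<chi> assume "\<chi> \<in> set \<chi>s"
    then obtain p :: "('a,'r,'c) struc \<times> ('a,'r,'c) struc" where "type_sentence L k ?\<tau> (?E p) \<chi>"
      using h1 by (elim ballE exE conjE) auto
    then show "is_sentence L k ?\<tau> \<chi>" by (rule ts_sent)
  qed
  have P3: "C_invariant \<sigma> D C ?\<psi>"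
    unfolding C_invariant_def
  proof (intro ballI impI)
    fix A' B1 B2 assume A': "A' \<in> D" and B1: "B1 \<in> C" and B2: "B2 \<in> C"
      and d1: "sdom B1 = sdom A'" and d2: "sdom B2 = sdom A'"
    have s12: "sim_k L k \<sigma> \<sigma>' D C (A', B1) (A', B2)" "sim_k L k \<sigma> \<sigma>' D C (A', B2) (A', B1)"
      using A' B1 B2 d1 d2 by (auto simp: sim_k_def admissible_def)
    have "is_flip L k \<sigma> \<sigma>' D C (A, B) (A', B1) = is_flip L k \<sigma> \<sigma>' D C (A, B) (A', B2)"
      using s12 unfolding is_flip_def by (meson rtranclp.rtrancl_into_rtrancl)
    then show "models (expand \<sigma> A' B1) ?\<psi> = models (expand \<sigma> A' B2) ?\<psi>"
      using P1[OF A' B1 d1[symmetric]] P1[OF A' B2 d2[symmetric]] by simp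
  qed
  have P4: "(inv_tp L k \<sigma> \<sigma>' D C A = inv_tp L k \<sigma> \<sigma>' D C A') = (A' \<in> Q_of \<sigma> D C ?\<psi>)"
    if A': "A' \<in> D" for A'
  proof
    assume eq: "inv_tp L k \<sigma> \<sigma>' D C A = inv_tp L k \<sigma> \<sigma>' D C A'"
    have "is_flip L k \<sigma> \<sigma>' D C (A, B) (A, B)" unfolding is_flip_def by simp
    then have "models (expand \<sigma> A B) ?\<psi>" using P1[OF assms(6,7,8)] by simp
    then have "A \<in> Q_of \<sigma> D C ?\<psi>" using assms(6-8) unfolding Q_of_def by auto
    then have "?\<psi> \<in> inv_tp L k \<sigma> \<sigma>' D C A" using P2 P3 unfolding inv_tp_def by simp
    then show "A' \<in> Q_of \<sigma> D C ?\<psi>" using eq unfolding inv_tp_def by simp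
  next
    assume "A' \<in> Q_of \<sigma> D C ?\<psi>"
    then obtain B' where B': "B' \<in> C" "sdom B' = sdom A'" "models (expand \<sigma> A' B') ?\<psi>"
      unfolding Q_of_def by blast
    have fl: "is_flip L k \<sigma> \<sigma>' D C (A, B) (A', B')" using P1[OF A' B'(1) B'(2)[symmetric]] B'(3) by simp
    have adm': "admissible \<sigma> D C (A', B')" using A' B' by (simp add: admissible_def)
    show "inv_tp L k \<sigma> \<sigma>' D C A = inv_tp L k \<sigma> \<sigma>' D C A'"
    proof (rule set_eqI)
      fix \<phi>
      show "(\<phi> \<in> inv_tp L k \<sigma> \<sigma>' D C A) = (\<phi> \<in> inv_tp L k \<sigma> \<sigma>' D C A')"
      proof (cases "is_sentence L k ?\<tau> \<phi> \<and> C_invariant \<sigma> D C \<phi>")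
        case True
        have "(A \<in> Q_of \<sigma> D C \<phi>) = (A' \<in> Q_of \<sigma> D C \<phi>)"
          using Q_char[OF adm0 True[THEN conjunct2]] Q_char[OF adm' True[THEN conjunct2]]
            flip_models[OF fl adm0 True[THEN conjunct1] True[THEN conjunct2]] by simp
        then show ?thesis unfolding inv_tp_def using True by simp
      next
        case False
        then show ?thesis unfolding inv_tp_def by auto
      qed
    qed
  qed
  show ?thesis using P1 P2 P3 P4 by blast
qed


end
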